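(* Let $G$ be a $\sigma$-compact locally compact Abelian group, $C>0$, let $\{P_\varepsilon\}_{0<\varepsilon<C}$ be a family of subsets of $G$ and $L\le G$ a subgroup satisfying (A1)–(A5) below. Then there is a unique Hausdorff-or-not group topology on $L$ for which $\{P_\varepsilon\}_{0<\varepsilon<C}$ is a neighbourhood basis of $0$; let $H$ be the (Hausdorff) completion of $L$ with respect to this (uniform) topology and $\phi: L\to H$ the completion map. Then $H$ is a locally compact Abelian group, the set $\widetilde{L}:=\{(t,\phi(t)) : t\in L\}$ is a lattice in $G\times H$, and $(G\times H,\widetilde{L})$ is a cut and project scheme, with $\pi_1(\widetilde L)=L$ and star map $\phi$. The conditions are: (A1) $0\in P_\varepsilon=-P_\varepsilon$ for all $0<\varepsilon<C$; (A2) each $P_\varepsilon$ ($0<\varepsilon<C$) is locally finite in $G$; (A3) $P_\varepsilon+P_{\varepsilon'}\subset P_{\varepsilon+\varepsilon'}$ whenever $\varepsilon,\varepsilon'>0$, $\varepsilon+\varepsilon'<C$; (A4) each $P_\varepsilon$ ($0<\varepsilon<C$) is relatively dense in $G$; (A5) $P_\varepsilon\subset L$ for all $0<\varepsilon<C$.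
   Context: A subset $A\subset G$ is locally finite if $A\cap K$ is finite for every compact $K$; relatively dense if $A+K=G$ for some compact $K$. A lattice in a locally compact Abelian group is a discrete subgroup that is relatively dense (equivalently, cocompact). A cut and project scheme $(G\times H,\widetilde L)$ consists of locally compact Abelian groups $G,H$ and a lattice $\widetilde L\subset G\times H$ such that the projection $\pi_1:G\times H\to G$ is injective on $\widetilde L$ and $\pi_2(\widetilde L)$ is dense in $H$; the star map $\star:\pi_1(\widetilde L)\to H$ is $x\mapsto x^\star:=\pi_2((\pi_1|_{\widetilde L})^{-1}(x))$. *)

theory Defs
  imports "HOL-Analysis.Analysis"
begin

definition locally_finite_set :: "'a::topological_space set \<Rightarrow> bool" where
  "locally_finite_set A \<longleftrightarrow> (\<forall>K. compact K \<longrightarrow> finite (A \<inter> K))"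

definition relatively_dense :: "'a::{topological_space, ab_group_add} set \<Rightarrow> bool" where
  "relatively_dense A \<longleftrightarrow> (\<exists>K. compact K \<and> {a + k | a k. a \<in> A \<and> k \<in> K} = UNIV)"

definition is_subgroup :: "'a::ab_group_add set \<Rightarrow> bool" where
  "is_subgroup A \<longleftrightarrow> 0 \<in> A \<and> (\<forall>x\<in>A. \<forall>y\<in>A. x + y \<in> A) \<and> (\<forall>x\<in>A. - x \<in> A)"

definition discrete_set :: "'a::topological_space set \<Rightarrow> bool" where
  "discrete_set A \<longleftrightarrow> (\<forall>x\<in>A. \<exists>U. open U \<and> U \<inter> A = {x})"

definition is_lattice :: "'a::{topological_space, ab_group_add} set \<Rightarrow> bool" where
  "is_lattice A \<longleftrightarrow> is_subgroup A \<and> discrete_set A \<and> relatively_dense A"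

definition sigma_compact_space :: "'a::topological_space itself \<Rightarrow> bool" where
  "sigma_compact_space _ \<longleftrightarrow>
     (\<exists>K :: nat \<Rightarrow> 'a set. (\<forall>n. compact (K n)) \<and> (\<Union>n. K n) = UNIV)"

definition star_map :: "('g \<times> 'h) set \<Rightarrow> 'g \<Rightarrow> 'h" where
  "star_map Lt x = snd (THE p. p \<in> Lt \<and> fst p = x)"

definition cut_and_project_scheme ::
  "('g::{topological_space, ab_group_add} \<times> 'h::{topological_space, ab_group_add}) set \<Rightarrow> bool" where
  "cut_and_project_scheme Lt \<longleftrightarrow>
     is_lattice Lt \<and> inj_on fst Lt \<and> closure (snd ` Lt) = UNIV"

text \<open>Cauchy filters and completeness for the (two-sided = left = right, abelian)
  group uniformity.\<close>
definition group_cauchy :: "'a::{topological_space, ab_group_add} filter \<Rightarrow> bool" where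
  "group_cauchy F \<longleftrightarrow>
     (\<forall>U. open U \<and> 0 \<in> U \<longrightarrow>
        (\<exists>A. eventually (\<lambda>x. x \<in> A) F \<and> (\<forall>x\<in>A. \<forall>y\<in>A. x - y \<in> U)))"

definition complete_group :: "'a::{topological_space, ab_group_add} itself \<Rightarrow> bool" where
  "complete_group _ \<longleftrightarrow>
     (\<forall>F :: 'a filter. F \<noteq> bot \<and> group_cauchy F \<longrightarrow> (\<exists>x. F \<le> nhds x))"

text \<open>phi : L -> H is the (Hausdorff) completion map of L for the group topology on L
  having {P eps | 0 < eps < C} as neighbourhood basis of 0: H is required (in the theorem)
  to be a complete Hausdorff abelian topological group, phi is a homomorphism with dense
  image, and the topology of L is the initial topology of phi (i.e. the preimages under phi
  of neighbourhoods of 0 in H and the sets P eps generate the same neighbourhood filter of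
  0 in L).\<close>
definition is_completion_map ::
  "(real \<Rightarrow> 'g::ab_group_add set) \<Rightarrow> real \<Rightarrow> 'g set \<Rightarrow> ('g \<Rightarrow> 'h::{topological_space, ab_group_add}) \<Rightarrow> bool" where
  "is_completion_map P C L \<phi> \<longleftrightarrow>
     (\<forall>x\<in>L. \<forall>y\<in>L. \<phi> (x + y) = \<phi> x + \<phi> y) \<and>
     closure (\<phi> ` L) = UNIV \<and>
     (\<forall>U. open U \<and> 0 \<in> U \<longrightarrow> (\<exists>\<epsilon>. 0 < \<epsilon> \<and> \<epsilon> < C \<and> P \<epsilon> \<subseteq> {t \<in> L. \<phi> t \<in> U})) \<and>
     (\<forall>\<epsilon>. 0 < \<epsilon> \<and> \<epsilon> < C \<longrightarrow> (\<exists>U. open U \<and> 0 \<in> U \<and> {t \<in> L. \<phi> t \<in> U} \<subseteq> P \<epsilon>))"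

end

theory Submission
  imports Defs
begin

lemma open_vimage_UNIV: "continuous_on UNIV f \<Longrightarrow> open B \<Longrightarrow> open (f -` B)"
  using continuous_imp_open_vimage[of UNIV f B] by simp

lemma ex_open_sum:
  fixes W :: "'h::topological_ab_group_add set"
  assumes "open W" "0 \<in> W"
  shows "\<exists>V. open V \<and> 0 \<in> V \<and> (\<forall>a\<in>V. \<forall>b\<in>V. a + b \<in> W)"
proof -
  have "open ((\<lambda>p::'h\<times>'h. fst p + snd p) -` W)"
    by (rule open_vimage_UNIV) (auto intro!: continuous_intros assms)
  moreover have "(0,0) \<in> (\<lambda>p::'h\<times>'h. fst p + snd p) -` W" using assms by simp
  ultimately obtain A B where AB: "open A" "open B" "(0,0) \<in> A \<times> B"
     "A \<times> B \<subseteq> (\<lambda>p::'h\<times>'h. fst p + snd p) -` W"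
    by (rule open_prod_elim)
  show ?thesis
    by (rule exI[of _ "A \<inter> B"]) (use AB in auto)
qed

lemma ex_open_diff:
  fixes W :: "'h::topological_ab_group_add set"
  assumes "open W" "0 \<in> W"
  shows "\<exists>V. open V \<and> 0 \<in> V \<and> (\<forall>a\<in>V. \<forall>b\<in>V. a - b \<in> W)"
proof -
  have "open ((\<lambda>p::'h\<times>'h. fst p - snd p) -` W)"
    by (rule open_vimage_UNIV) (auto intro!: continuous_intros assms)
  moreover have "(0,0) \<in> (\<lambda>p::'h\<times>'h. fst p - snd p) -` W" using assms by simp
  ultimately obtain A B where AB: "open A" "open B" "(0,0) \<in> A \<times> B"
     "A \<times> B \<subseteq> (\<lambda>p::'h\<times>'h. fst p - snd p) -` W"
    by (rule open_prod_elim)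
  show ?thesis
    by (rule exI[of _ "A \<inter> B"]) (use AB in auto)
qed

lemma closure_sub_sum:
  fixes V :: "'h::topological_ab_group_add set"
  assumes "open W" "0 \<in> W" "x \<in> closure V"
  shows "\<exists>v\<in>V. \<exists>w\<in>W. x = v + w"
proof -
  have o: "open ((\<lambda>y. x - y) -` W)"
    by (rule open_vimage_UNIV) (auto intro!: continuous_intros assms)
  have "x \<in> (\<lambda>y. x - y) -` W \<inter> closure V" using assms by simp
  then have "(\<lambda>y. x - y) -` W \<inter> closure V \<noteq> {}" by blast
  then have "(\<lambda>y. x - y) -` W \<inter> V \<noteq> {}" using open_Int_closure_eq_empty[OF o] by simp
  then obtain v where "v \<in> V" "x - v \<in> W" by auto
  then show ?thesis by (intro bexI[of _ v] bexI[of _ "x - v"]) auto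
qed

definition ultra :: "'a filter \<Rightarrow> bool" where
  "ultra F \<longleftrightarrow> F \<noteq> bot \<and> (\<forall>P. eventually P F \<or> eventually (\<lambda>x. \<not> P x) F)"

lemma maximal_is_ultra:
  assumes "F \<noteq> bot"
  assumes max: "\<And>G. G \<noteq> bot \<Longrightarrow> G \<le> F \<Longrightarrow> F = G"
  shows "ultra F"
  unfolding ultra_def
proof (intro conjI allI assms(1))
  fix P
  show "eventually P F \<or> eventually (\<lambda>x. \<not> P x) F"
  proof (rule disjCI)
    assume "\<not> eventually (\<lambda>x. \<not> P x) F"
    then have "inf F (principal {x. P x}) \<noteq> bot"
      by (simp add: trivial_limit_def eventually_inf_principal)
    then have F: "F = inf F (principal {x. P x})"
      by (rule max) simp
    show "eventually P F"
      by (subst F) (simp add: eventually_inf_principal)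
  qed
qed

lemma ex_ultra:
  fixes F :: "'a filter"
  assumes F: "F \<noteq> bot"
  shows "\<exists>U\<le>F. ultra U"
proof -
  let ?R = "{(b, a). a \<noteq> bot \<and> a \<le> b \<and> b \<le> F}"
  have bot_notin_R: "c \<in> Chains ?R \<Longrightarrow> bot \<notin> c" for c
    by (auto simp: Chains_def)
  have [simp]: "Field ?R = {G. G \<noteq> bot \<and> G \<le> F}"
    by (auto simp: Field_def bot_unique)
  have "\<exists>m\<in>Field ?R. \<forall>a\<in>Field ?R. (m, a) \<in> ?R \<longrightarrow> a = m"
  proof (rule Zorns_po_lemma)
    show "Partial_order ?R"
      by (auto simp: partial_order_on_def preorder_on_def
          antisym_def refl_on_def trans_def Field_def bot_unique)
    show "\<exists>u\<in>Field ?R. \<forall>a\<in>C. (a, u) \<in> ?R" if C: "C \<in> Chains ?R" for C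
    proof (simp, intro exI conjI ballI)
      have Inf_C: "Inf C \<noteq> bot" "Inf C \<le> F" if "C \<noteq> {}"
      proof -
        from C that have "Inf C = bot \<longleftrightarrow> (\<exists>x\<in>C. x = bot)"
          unfolding trivial_limit_def by (intro eventually_Inf_base) (auto simp: Chains_def)
        with C show "Inf C \<noteq> bot"
          by (simp add: bot_notin_R)
        from that obtain x where "x \<in> C" by auto
        with C show "Inf C \<le> F"
          by (auto intro!: Inf_lower2[of x] simp: Chains_def)
      qed
      then have [simp]: "inf F (Inf C) = (if C = {} then F else Inf C)"
        using C by (auto simp add: inf_absorb2)
      from C show "inf F (Inf C) \<noteq> bot"
        by (simp add: F Inf_C)
      from C show "inf F (Inf C) \<le> F"
        by (simp add: Chains_def Inf_C F)
      with C show "inf F (Inf C) \<le> x" "x \<le> F" if "x \<in> C" for x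
        using that  by (auto intro: Inf_lower simp: Chains_def)
    qed
  qed
  then obtain U where U: "U \<noteq> bot" "U \<le> F" "\<And>a. a \<noteq> bot \<Longrightarrow> a \<le> U \<Longrightarrow> a = U"
    by auto
  have "ultra U"
    by (rule maximal_is_ultra) (use U in auto)
  then show ?thesis using U by auto
qed

lemma ultra_finite_union:
  assumes "ultra U" "finite S" "eventually (\<lambda>x. \<exists>f\<in>S. Q f x) U"
  shows "\<exists>f\<in>S. eventually (Q f) U"
proof (rule ccontr)
  assume "\<not> ?thesis"
  moreover have "\<And>f. eventually (Q f) U \<or> eventually (\<lambda>x. \<not> Q f x) U"
    using assms(1) unfolding ultra_def by simp
  ultimately have "\<forall>f\<in>S. eventually (\<lambda>x. \<not> Q f x) U" by blast
  then have "eventually (\<lambda>x. \<forall>f\<in>S. \<not> Q f x) U" by (rule eventually_ball_finite[OF assms(2)])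
  with assms(3) have "eventually (\<lambda>x. (\<exists>f\<in>S. Q f x) \<and> (\<forall>f\<in>S. \<not> Q f x)) U"
    by (rule eventually_conj)
  then have "eventually (\<lambda>x. False) U"
    by (rule eventually_mono) blast
  then show False using assms(1) unfolding ultra_def by (simp add: eventually_False)
qed

lemma compact_tb:
  fixes E :: "'h::{topological_ab_group_add, t2_space} set"
  assumes cg: "complete_group TYPE('h)" and cl: "closed E"
    and tb: "\<And>W. open W \<Longrightarrow> 0 \<in> W \<Longrightarrow> \<exists>S. finite S \<and> (\<forall>x\<in>E. \<exists>f\<in>S. x - f \<in> W)"
  shows "compact E"
  unfolding compact_filter
proof (intro allI impI)
  fix F :: "'h filter"
  assume Fb: "F \<noteq> bot" and FE: "eventually (\<lambda>x. x \<in> E) F"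
  obtain U where UF: "U \<le> F" and U: "ultra U" using ex_ultra[OF Fb] by blast
  have Ub: "U \<noteq> bot" using U unfolding ultra_def by simp
  have UE: "eventually (\<lambda>x. x \<in> E) U" using UF FE by (rule filter_leD)
  have "group_cauchy U"
    unfolding group_cauchy_def
  proof (intro allI impI)
    fix W :: "'h set" assume W: "open W \<and> 0 \<in> W"
    obtain W1 where W1: "open W1" "0 \<in> W1" "\<forall>a\<in>W1. \<forall>b\<in>W1. a - b \<in> W"
      using ex_open_diff[of W] W by blast
    obtain S where S: "finite S" "\<forall>x\<in>E. \<exists>f\<in>S. x - f \<in> W1" using tb[OF W1(1,2)] by blast
    have "eventually (\<lambda>x. \<exists>f\<in>S. x - f \<in> W1) U"
      using UE by (rule eventually_mono) (use S in auto)
    then obtain f where "f \<in> S" "eventually (\<lambda>x. x - f \<in> W1) U"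
      using ultra_finite_union[OF U S(1), of "\<lambda>f x. x - f \<in> W1"] by blast
    moreover have "\<forall>x\<in>{x. x - f \<in> W1}. \<forall>y\<in>{x. x - f \<in> W1}. x - y \<in> W"
    proof (intro ballI)
      fix x y assume "x \<in> {x. x - f \<in> W1}" "y \<in> {x. x - f \<in> W1}"
      then have "(x - f) - (y - f) \<in> W" using W1(3) by blast
      moreover have "(x - f) - (y - f) = x - y" by (simp add: algebra_simps)
      ultimately show "x - y \<in> W" by simp
    qed
    ultimately show "\<exists>A. eventually (\<lambda>x. x \<in> A) U \<and> (\<forall>x\<in>A. \<forall>y\<in>A. x - y \<in> W)"
      by (intro exI[of _ "{x. x - f \<in> W1}"]) auto
  qed
  then obtain x where x: "U \<le> nhds x" using cg Ub unfolding complete_group_def by blast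
  have "(id \<longlongrightarrow> x) U" using x by (simp add: filterlim_def)
  then have "x \<in> E" using Lim_in_closed_set[OF cl _ Ub, of id x] UE by simp
  moreover have "inf (nhds x) F \<noteq> bot"
  proof
    assume "inf (nhds x) F = bot"
    moreover have "U \<le> inf (nhds x) F" using x UF by simp
    ultimately show False using Ub bot_unique by metis
  qed
  ultimately show "\<exists>x\<in>E. inf (nhds x) F \<noteq> bot" by blast
qed

theorem theorem2p9:
  fixes P :: "real \<Rightarrow> 'g::{topological_ab_group_add, t2_space} set"
    and C :: real
    and L :: "'g set"
    and \<phi> :: "'g \<Rightarrow> 'h::{topological_ab_group_add, t2_space}"
  assumes G_lc: "locally_compact_space (euclidean :: 'g topology)"
    and G_sigma: "sigma_compact_space TYPE('g)"
    and C_pos: "C > 0"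
    and L_sub: "is_subgroup L"
    and A1: "\<And>\<epsilon>. 0 < \<epsilon> \<Longrightarrow> \<epsilon> < C \<Longrightarrow> 0 \<in> P \<epsilon> \<and> uminus ` P \<epsilon> = P \<epsilon>"
    and A2: "\<And>\<epsilon>. 0 < \<epsilon> \<Longrightarrow> \<epsilon> < C \<Longrightarrow> locally_finite_set (P \<epsilon>)"
    and A3: "\<And>\<epsilon> \<epsilon>'. 0 < \<epsilon> \<Longrightarrow> 0 < \<epsilon>' \<Longrightarrow> \<epsilon> + \<epsilon>' < C \<Longrightarrow>
               {x + y | x y. x \<in> P \<epsilon> \<and> y \<in> P \<epsilon>'} \<subseteq> P (\<epsilon> + \<epsilon>')"
    and A4: "\<And>\<epsilon>. 0 < \<epsilon> \<Longrightarrow> \<epsilon> < C \<Longrightarrow> relatively_dense (P \<epsilon>)"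
    and A5: "\<And>\<epsilon>. 0 < \<epsilon> \<Longrightarrow> \<epsilon> < C \<Longrightarrow> P \<epsilon> \<subseteq> L"
    and H_complete: "complete_group TYPE('h)"
    and completion: "is_completion_map P C L \<phi>"
  shows "locally_compact_space (euclidean :: 'h topology)
       \<and> is_lattice {(t, \<phi> t) | t. t \<in> L}
       \<and> cut_and_project_scheme {(t, \<phi> t) | t. t \<in> L}
       \<and> fst ` {(t, \<phi> t) | t. t \<in> L} = L
       \<and> (\<forall>t\<in>L. star_map {(t, \<phi> t) | t. t \<in> L} t = \<phi> t)"
proof -
  define Lt where "Lt = {(t, \<phi> t) | t. t \<in> L}"
  note cm = completion[unfolded is_completion_map_def]
  have hom: "\<And>x y. x \<in> L \<Longrightarrow> y \<in> L \<Longrightarrow> \<phi> (x + y) = \<phi> x + \<phi> y"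
    using cm[THEN conjunct1] by blast
  have dense: "closure (\<phi> ` L) = UNIV"
    using cm[THEN conjunct2, THEN conjunct1] .
  have c3: "\<And>U. open U \<Longrightarrow> 0 \<in> U \<Longrightarrow> \<exists>\<epsilon>. 0 < \<epsilon> \<and> \<epsilon> < C \<and> P \<epsilon> \<subseteq> {t \<in> L. \<phi> t \<in> U}"
    using cm[THEN conjunct2, THEN conjunct2, THEN conjunct1] by blast
  have c4: "\<And>\<epsilon>. 0 < \<epsilon> \<Longrightarrow> \<epsilon> < C \<Longrightarrow> \<exists>U. open U \<and> 0 \<in> U \<and> {t \<in> L. \<phi> t \<in> U} \<subseteq> P \<epsilon>"
    using cm[THEN conjunct2, THEN conjunct2, THEN conjunct2] by blast
  have L0: "0 \<in> L" and Ladd: "\<And>x y. x \<in> L \<Longrightarrow> y \<in> L \<Longrightarrow> x + y \<in> L"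
    and Lneg: "\<And>x. x \<in> L \<Longrightarrow> - x \<in> L"
    using L_sub unfolding is_subgroup_def by blast+
  have Ldiff: "\<And>x y. x \<in> L \<Longrightarrow> y \<in> L \<Longrightarrow> x - y \<in> L"
    using Ladd Lneg by (metis diff_conv_add_uminus)
  have phi0: "\<phi> 0 = 0"
    using hom[OF L0 L0] by simp
  have phineg: "\<And>x. x \<in> L \<Longrightarrow> \<phi> (- x) = - \<phi> x"
  proof -
    fix x assume x: "x \<in> L"
    have "\<phi> (x + - x) = \<phi> x + \<phi> (- x)" using hom[OF x Lneg[OF x]] .
    then have "0 = \<phi> x + \<phi> (- x)" using phi0 by simp
    then show "\<phi> (- x) = - \<phi> x" by (simp add: eq_neg_iff_add_eq_0 add.commute)
  qed
  have phidiff: "\<And>x y. x \<in> L \<Longrightarrow> y \<in> L \<Longrightarrow> \<phi> (x - y) = \<phi> x - \<phi> y"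
    using hom Lneg phineg by (metis diff_conv_add_uminus)
  have Padd: "\<And>e e' x y. 0 < e \<Longrightarrow> 0 < e' \<Longrightarrow> e + e' < C \<Longrightarrow> x \<in> P e \<Longrightarrow> y \<in> P e' \<Longrightarrow> x + y \<in> P (e + e')"
    using A3 by blast
  have Pneg: "\<And>e x. 0 < e \<Longrightarrow> e < C \<Longrightarrow> x \<in> P e \<Longrightarrow> - x \<in> P e"
  proof -
    fix e x assume "0 < e" "e < C" "x \<in> P e"
    then have "- x \<in> uminus ` P e" by blast
    then show "- x \<in> P e" using A1[OF \<open>0 < e\<close> \<open>e < C\<close>] by simp
  qed
  have mono: "\<And>a b. 0 < a \<Longrightarrow> a \<le> b \<Longrightarrow> b < C \<Longrightarrow> P a \<subseteq> P b"
  proof -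
    fix a b :: real assume ab: "0 < a" "a \<le> b" "b < C"
    show "P a \<subseteq> P b"
    proof (cases "a = b")
      case False
      then have "0 < b - a" using ab by simp
      have "0 \<in> P (b - a)" using A1[of "b - a"] ab \<open>0 < b - a\<close> by simp
      show ?thesis
      proof
        fix x assume "x \<in> P a"
        then have "x + 0 \<in> P (a + (b - a))"
          using Padd[of a "b - a" x 0] ab \<open>0 < b - a\<close> \<open>0 \<in> P (b - a)\<close> by simp
        then show "x \<in> P b" by simp
      qed
    qed simp
  qed
  define e0 where "e0 = C / 2"
  have e0: "0 < e0" "e0 < C" using C_pos by (simp_all add: e0_def)
  have TBG: "\<exists>F. finite F \<and> F \<subseteq> L \<and> (\<forall>x\<in>P e0. \<exists>p\<in>P d. \<exists>f\<in>F. x = p + f)"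
    if d: "0 < d" "d < C / 2" for d
  proof -
    have dC: "d < C" "e0 + d < C" using d by (simp_all add: e0_def)
    obtain K where K: "compact K" "{a + k | a k. a \<in> P d \<and> k \<in> K} = UNIV"
      using A4[OF d(1) dC(1)] unfolding relatively_dense_def by blast
    define F where "F = P (e0 + d) \<inter> K"
    have "finite F" using A2[of "e0 + d"] e0 d dC K(1) unfolding F_def locally_finite_set_def by simp
    moreover have "F \<subseteq> L" using A5[of "e0 + d"] e0 d dC unfolding F_def by auto
    moreover have "\<forall>x\<in>P e0. \<exists>p\<in>P d. \<exists>f\<in>F. x = p + f"
    proof
      fix x assume x: "x \<in> P e0"
      have "x \<in> {a + k | a k. a \<in> P d \<and> k \<in> K}" using K(2) by simp
      then obtain a k where ak: "a \<in> P d" "k \<in> K" "x = a + k" by blast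
      have "x + - a \<in> P (e0 + d)" using Padd[OF e0(1) d(1) dC(2) x Pneg[OF d(1) dC(1) ak(1)]] .
      moreover have "x + - a = k" using ak(3) by simp
      ultimately have "k \<in> F" using ak(2) unfolding F_def by simp
      then show "\<exists>p\<in>P d. \<exists>f\<in>F. x = p + f" using ak by blast
    qed
    ultimately show ?thesis by blast
  qed
  define E where "E = closure (\<phi> ` P e0)"
  obtain U0 where U0: "open U0" "0 \<in> U0" "{t \<in> L. \<phi> t \<in> U0} \<subseteq> P e0"
    using c4[OF e0] by blast
  have U0E: "U0 \<subseteq> E"
  proof
    fix y assume y: "y \<in> U0"
    show "y \<in> E" unfolding E_def closure_iff_nhds_not_empty
    proof (intro allI impI)
      fix A S assume S: "S \<subseteq> A" "open S" "y \<in> S"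
      have o: "open (S \<inter> U0)" using S U0 by auto
      have "y \<in> closure (\<phi> ` L)" using dense by simp
      then have "S \<inter> U0 \<inter> \<phi> ` L \<noteq> {}"
        using open_Int_closure_eq_empty[OF o, of "\<phi> ` L"] y S by auto
      then obtain t where t: "t \<in> L" "\<phi> t \<in> S" "\<phi> t \<in> U0" by blast
      then have "t \<in> P e0" using U0(3) by blast
      then show "\<phi> ` P e0 \<inter> A \<noteq> {}" using t S by blast
    qed
  qed
  have Ecomp: "compact E"
  proof (rule compact_tb[OF H_complete])
    show "closed E" unfolding E_def by simp
  next
    fix W :: "'h set" assume W: "open W" "0 \<in> W"
    obtain V where V: "open V" "0 \<in> V" "\<forall>a\<in>V. \<forall>b\<in>V. a + b \<in> W"
      using ex_open_sum[OF W] by blast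
    obtain e' where e': "0 < e'" "e' < C" "P e' \<subseteq> {t \<in> L. \<phi> t \<in> V}"
      using c3[OF V(1,2)] by blast
    define d where "d = min e' (C / 4)"
    have d: "0 < d" "d < C / 2" "d \<le> e'" using e' C_pos by (auto simp: d_def)
    have Pd: "P d \<subseteq> {t \<in> L. \<phi> t \<in> V}" using mono[OF d(1) d(3) e'(2)] e'(3) by blast
    obtain F where F: "finite F" "F \<subseteq> L" "\<forall>x\<in>P e0. \<exists>p\<in>P d. \<exists>f\<in>F. x = p + f"
      using TBG[OF d(1,2)] by blast
    show "\<exists>S. finite S \<and> (\<forall>x\<in>E. \<exists>f\<in>S. x - f \<in> W)"
    proof (intro exI conjI ballI)
      show "finite (\<phi> ` F)" using F(1) by simp
    next
      fix x assume "x \<in> E"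
      then obtain s v where sv: "s \<in> \<phi> ` P e0" "v \<in> V" "x = s + v"
        using closure_sub_sum[OF V(1,2)] unfolding E_def by blast
      then obtain y where y: "y \<in> P e0" "s = \<phi> y" by blast
      then obtain p f where pf: "p \<in> P d" "f \<in> F" "y = p + f" using F(3) by blast
      have pL: "p \<in> L" "\<phi> p \<in> V" using Pd pf(1) by auto
      have fL: "f \<in> L" using F(2) pf(2) by auto
      have "x - \<phi> f = \<phi> p + v" using sv y pf hom[OF pL(1) fL] by simp
      then have "x - \<phi> f \<in> W" using V(3) pL(2) sv(2) by simp
      then show "\<exists>f\<in>\<phi> ` F. x - f \<in> W" using pf(2) by blast
    qed
  qed
  have Hlc: "locally_compact_space (euclidean :: 'h topology)"
    unfolding locally_compact_space_def
  proof (intro ballI)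
    fix x :: 'h
    have "open ((\<lambda>y. y - x) -` U0)"
      by (rule open_vimage_UNIV) (auto intro!: continuous_intros U0)
    moreover have "compact ((\<lambda>y. x + y) ` E)"
      by (rule compact_continuous_image[OF _ Ecomp]) (auto intro!: continuous_intros)
    moreover have "x \<in> (\<lambda>y. y - x) -` U0" using U0 by simp
    moreover have "(\<lambda>y. y - x) -` U0 \<subseteq> (\<lambda>y. x + y) ` E"
    proof
      fix y assume "y \<in> (\<lambda>y. y - x) -` U0"
      then have "y - x \<in> E" using U0E by auto
      moreover have "y = x + (y - x)" by simp
      ultimately show "y \<in> (\<lambda>y. x + y) ` E" by blast
    qed
    ultimately show "\<exists>U K. openin euclidean U \<and> compactin euclidean K \<and> x \<in> U \<and> U \<subseteq> K"
      by (metis open_openin compactin_euclidean_iff)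
  qed
  have sub: "is_subgroup Lt"
    unfolding is_subgroup_def Lt_def
  proof (intro conjI ballI)
    show "0 \<in> {(t, \<phi> t) |t. t \<in> L}" using L0 phi0 by (auto simp: zero_prod_def)
  next
    fix x y assume "x \<in> {(t, \<phi> t) |t. t \<in> L}" "y \<in> {(t, \<phi> t) |t. t \<in> L}"
    then obtain s t where "s \<in> L" "t \<in> L" "x = (s, \<phi> s)" "y = (t, \<phi> t)" by blast
    then show "x + y \<in> {(t, \<phi> t) |t. t \<in> L}" using hom Ladd by auto
  next
    fix x assume "x \<in> {(t, \<phi> t) |t. t \<in> L}"
    then obtain s where "s \<in> L" "x = (s, \<phi> s)" by blast
    then show "- x \<in> {(t, \<phi> t) |t. t \<in> L}" using phineg Lneg by auto
  qed
  have disc: "discrete_set Lt"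
    unfolding discrete_set_def
  proof
    fix z assume "z \<in> Lt"
    then obtain t where t: "t \<in> L" "z = (t, \<phi> t)" unfolding Lt_def by blast
    have "\<exists>U K. openin euclidean U \<and> compactin (euclidean::'g topology) K \<and> (0::'g) \<in> U \<and> U \<subseteq> K"
      using G_lc unfolding locally_compact_space_def by simp
    then obtain V0 K0 where VK0: "openin euclidean V0" "compactin (euclidean::'g topology) K0" "0 \<in> V0" "V0 \<subseteq> K0"
      by blast
    have "open V0" using VK0(1) open_openin by blast
    moreover have "compact K0" using VK0(2) compactin_euclidean_iff by blast
    ultimately have VK: "open V0" "compact K0" "0 \<in> V0" "V0 \<subseteq> K0" using VK0(3,4) by blast+
    define Fi where "Fi = P e0 \<inter> K0 - {0}"
    have "finite Fi" using A2[OF e0] VK(2) unfolding Fi_def locally_finite_set_def by simp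
    define V where "V = V0 - Fi"
    have oV: "open V" unfolding V_def using VK(1) \<open>finite Fi\<close> by (simp add: open_Diff finite_imp_closed)
    define W where "W = ((\<lambda>s. s - t) -` V) \<times> ((\<lambda>h. h - \<phi> t) -` U0)"
    have "open W" unfolding W_def
      by (intro open_Times open_vimage_UNIV oV U0(1)) (auto intro!: continuous_intros)
    moreover have "W \<inter> Lt = {z}"
    proof
      show "{z} \<subseteq> W \<inter> Lt" using t \<open>z \<in> Lt\<close> VK(3) U0(2) unfolding W_def V_def Fi_def by auto
    next
      show "W \<inter> Lt \<subseteq> {z}"
      proof
        fix w assume w: "w \<in> W \<inter> Lt"
        then obtain s where s: "s \<in> L" "w = (s, \<phi> s)" unfolding Lt_def by blast
        have sV: "s - t \<in> V" and sU: "\<phi> s - \<phi> t \<in> U0" using w s unfolding W_def by auto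
        have "s - t \<in> L" using Ldiff s(1) t(1) by simp
        moreover have "\<phi> (s - t) \<in> U0" using sU phidiff[OF s(1) t(1)] by simp
        ultimately have "s - t \<in> P e0" using U0(3) by blast
        moreover have "s - t \<in> K0" "s - t \<notin> Fi" using sV VK(4) unfolding V_def by auto
        ultimately have "s - t = 0" unfolding Fi_def by blast
        then show "w \<in> {z}" using s t by simp
      qed
    qed
    ultimately show "\<exists>U. open U \<and> U \<inter> Lt = {z}" by blast
  qed
  have rd: "relatively_dense Lt"
    unfolding relatively_dense_def
  proof -
    obtain K1 where K1: "compact K1" "{a + k | a k. a \<in> P e0 \<and> k \<in> K1} = UNIV"
      using A4[OF e0] unfolding relatively_dense_def by blast
    define D where "D = (\<lambda>p. fst p - snd p) ` (E \<times> E)"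
    have "compact D" unfolding D_def
      by (rule compact_continuous_image[OF _ compact_Times[OF Ecomp Ecomp]]) (auto intro!: continuous_intros)
    then have cK: "compact (K1 \<times> D)" using K1(1) by (simp add: compact_Times)
    have "{a + k | a k. a \<in> Lt \<and> k \<in> K1 \<times> D} = UNIV"
    proof (rule set_eqI, rule iffI)
      fix z :: "'g \<times> 'h"
      obtain g h where z: "z = (g, h)" by fastforce
      have o: "open ((\<lambda>y. h - y) -` U0)"
        by (rule open_vimage_UNIV) (auto intro!: continuous_intros U0)
      have "h \<in> (\<lambda>y. h - y) -` U0 \<inter> closure (\<phi> ` L)" using dense U0 by simp
      then have "(\<lambda>y. h - y) -` U0 \<inter> \<phi> ` L \<noteq> {}"
        using open_Int_closure_eq_empty[OF o, of "\<phi> ` L"] by blast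
      then obtain s where s: "s \<in> L" "h - \<phi> s \<in> U0" by blast
      have "g - s \<in> {a + k | a k. a \<in> P e0 \<and> k \<in> K1}" using K1(2) by simp
      then obtain p k where pk: "p \<in> P e0" "k \<in> K1" "g - s = p + k" by blast
      have pL: "p \<in> L" using A5[OF e0] pk(1) by blast
      have tL: "s + p \<in> L" using Ladd s(1) pL by simp
      have e1: "h - \<phi> s \<in> E" using U0E s(2) by blast
      have "\<phi> p \<in> \<phi> ` P e0" using pk(1) by blast
      then have e2: "\<phi> p \<in> E" unfolding E_def using closure_subset by blast
      have "(h - \<phi> s, \<phi> p) \<in> E \<times> E" using e1 e2 by blast
      then have dD: "(h - \<phi> s) - \<phi> p \<in> D" unfolding D_def
        by (rule rev_image_eqI) simp
      have "z = (s + p, \<phi> (s + p)) + (k, (h - \<phi> s) - \<phi> p)"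
        using z pk(3) hom[OF s(1) pL] by (simp add: algebra_simps)
      moreover have "(s + p, \<phi> (s + p)) \<in> Lt" using tL unfolding Lt_def by blast
      moreover have "(k, (h - \<phi> s) - \<phi> p) \<in> K1 \<times> D" using pk(2) dD by simp
      ultimately show "z \<in> {a + k | a k. a \<in> Lt \<and> k \<in> K1 \<times> D}" by blast
    qed simp
    then show "\<exists>K. compact K \<and> {a + k |a k. a \<in> Lt \<and> k \<in> K} = UNIV" using cK by blast
  qed
  have lat: "is_lattice Lt" unfolding is_lattice_def using sub disc rd by blast
  have injf: "inj_on fst Lt" unfolding Lt_def inj_on_def by auto
  have sndL: "snd ` Lt = \<phi> ` L" unfolding Lt_def by force
  have fstL: "fst ` Lt = L" unfolding Lt_def by force
  have cps: "cut_and_project_scheme Lt"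
    unfolding cut_and_project_scheme_def using lat injf sndL dense by simp
  have star: "\<forall>t\<in>L. star_map Lt t = \<phi> t"
  proof
    fix t assume t: "t \<in> L"
    have "(THE p. p \<in> Lt \<and> fst p = t) = (t, \<phi> t)"
      by (rule the_equality) (use t in \<open>auto simp: Lt_def\<close>)
    then show "star_map Lt t = \<phi> t" unfolding star_map_def by simp
  qed
  show ?thesis using Hlc lat cps fstL star unfolding Lt_def by blast
qed

end
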